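(* Let $f$ be the map from countable graphs to structures in the class $\mathfrak C$ described in the context. For all countable graphs $\mathcal G,\mathcal H$: $\mathcal G$ embeds into $\mathcal H$ if and only if $f(\mathcal G)$ is elementarily embeddable into $f(\mathcal H)$.
   Context: Let $\mathcal S=(2^\omega,(F_\nu)_{\nu\in 2^{<\omega}},(R_\nu)_{\nu\in2^{<\omega}})$ where $F_\nu(\sigma)(x)=\sigma(x)+\nu(x)\bmod 2$ (with $\nu(x)=0$ for $x\ge|\nu|$) and $R_\nu(\sigma)$ holds iff $\nu\preceq\sigma$ ($\nu$ is an initial segment of $\sigma$). Let $\hat{\mathcal S}_0$, $\hat{\mathcal S}_1$ be the substructures of $\mathcal S$ generated by the constant sequence $\bar 0$, resp. $\bar 1$. Let $\mathcal S_0,\mathcal S_1$ be the relational versions of $\hat{\mathcal S}_0,\hat{\mathcal S}_1$, obtained by replacing each $F_\nu$ by its graph $graph_{F_\nu}$ (a binary relation), copied onto universe $\omega$. The class $\mathfrak C$ consists of structures with universe $\omega$ in the language with a unary relation $W$, binary relations $R_\nu$ and $graph_{F_\nu}$ ($\nu\in2^{<\omega}$), a binary relation $N$ and a ternary relation $O$. Fix a partition of $\omega$ into infinite coinfinite sets $(A_i)_{i\in\omega}$, write $A_0=\{a_0,a_1,\dots\}$, and let $\langle\cdot,\cdot\rangle$ be a pairing function. Given a graph $\mathcal G$ on $\omega$ with edge relation $E$, $f(\mathcal G)$ is defined by: $W(a_i)$ for all $a_i\in A_0$; for all $m,n$, the relations $R_\nu$, $graph_{F_\nu}$ restricted to $A_{\langle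 m,n\rangle+1}$ form a copy of $\mathcal S_0$ if $mEn$ and a copy of $\mathcal S_1$ if not $mEn$; $O(a_m,a_n,j)$ for all $j\in A_{\langle m,n\rangle+1}$; and for every $i$, $N(a_i,x)$ holds exactly for $x\in\bigcup_{j}A_{\langle i,j\rangle+1}$. No other instances of relations hold. An embedding of graphs is an injective map preserving edges and non-edges. *)

theory Defs
  imports Main
begin

type_synonym seq = "nat \<Rightarrow> bool"   (* elements of 2^omega; True = 1 *)

definition nuval :: "bool list \<Rightarrow> nat \<Rightarrow> bool" where
  "nuval \<nu> x = (x < length \<nu> \<and> \<nu> ! x)"

definition Ffun :: "bool list \<Rightarrow> seq \<Rightarrow> seq" where
  "Ffun \<nu> \<sigma> = (\<lambda>x. \<sigma> x \<noteq> nuval \<nu> x)"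

definition Rrel :: "bool list \<Rightarrow> seq \<Rightarrow> bool" where
  "Rrel \<nu> \<sigma> = (\<forall>i < length \<nu>. \<sigma> i = \<nu> ! i)"

text \<open>Universe of the substructure of S generated by a constant c
  (closure of c under all F_nu; S has no other functions).\<close>
inductive_set gen :: "seq \<Rightarrow> seq set" for c :: seq where
  base: "c \<in> gen c"
| step: "\<sigma> \<in> gen c \<Longrightarrow> Ffun \<nu> \<sigma> \<in> gen c"

definition zero_seq :: seq where "zero_seq = (\<lambda>_. False)"
definition one_seq :: seq where "one_seq = (\<lambda>_. True)"

datatype rsym = WRel | RRel "bool list" | GRel "bool list" | NRel | ORel

fun arity :: "rsym \<Rightarrow> nat" where
  "arity WRel = 1"
| "arity (RRel _) = 1"
| "arity (GRel _) = 2"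
| "arity NRel = 2"
| "arity ORel = 3"

type_synonym struc = "rsym \<Rightarrow> nat list \<Rightarrow> bool"

datatype fm = Atom rsym "nat list" | Eq nat nat | Neg fm | Conj fm fm | Ex nat fm

fun sat :: "struc \<Rightarrow> (nat \<Rightarrow> nat) \<Rightarrow> fm \<Rightarrow> bool" where
  "sat M e (Atom r xs) = M r (map e xs)"
| "sat M e (Eq i j) = (e i = e j)"
| "sat M e (Neg \<phi>) = (\<not> sat M e \<phi>)"
| "sat M e (Conj \<phi> \<psi>) = (sat M e \<phi> \<and> sat M e \<psi>)"
| "sat M e (Ex i \<phi>) = (\<exists>x. sat M (e(i := x)) \<phi>)"

definition elem_emb :: "struc \<Rightarrow> struc \<Rightarrow> (nat \<Rightarrow> nat) \<Rightarrow> bool" where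
  "elem_emb M N h = (\<forall>\<phi> e. sat M e \<phi> = sat N (h \<circ> e) \<phi>)"

definition elem_embeddable :: "struc \<Rightarrow> struc \<Rightarrow> bool" where
  "elem_embeddable M N = (\<exists>h. elem_emb M N h)"

definition is_graph :: "(nat \<Rightarrow> nat \<Rightarrow> bool) \<Rightarrow> bool" where
  "is_graph E = ((\<forall>m n. E m n \<longrightarrow> E n m) \<and> (\<forall>m. \<not> E m m))"

definition graph_embeds :: "(nat \<Rightarrow> nat \<Rightarrow> bool) \<Rightarrow> (nat \<Rightarrow> nat \<Rightarrow> bool) \<Rightarrow> bool" where
  "graph_embeds E E' = (\<exists>g. inj g \<and> (\<forall>m n. E m n = E' (g m) (g n)))"

definition good_params ::
  "(nat \<Rightarrow> nat set) \<Rightarrow> (nat \<Rightarrow> nat) \<Rightarrow> (nat \<Rightarrow> nat \<Rightarrow> nat)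
   \<Rightarrow> (nat \<Rightarrow> nat \<Rightarrow> seq) \<Rightarrow> (nat \<Rightarrow> nat \<Rightarrow> seq) \<Rightarrow> bool" where
  "good_params A a pr c0 c1 =
     ((\<forall>i. infinite (A i) \<and> infinite (- A i))
      \<and> (\<forall>i j. i \<noteq> j \<longrightarrow> A i \<inter> A j = {})
      \<and> (\<Union>i. A i) = UNIV
      \<and> bij_betw a UNIV (A 0)
      \<and> bij (\<lambda>(m, n). pr m n)
      \<and> (\<forall>k. bij_betw (c0 k) (A k) (gen zero_seq))
      \<and> (\<forall>k. bij_betw (c1 k) (A k) (gen one_seq)))"

definition cp :: "(nat \<Rightarrow> nat \<Rightarrow> nat) \<Rightarrow> (nat \<Rightarrow> nat \<Rightarrow> seq) \<Rightarrow> (nat \<Rightarrow> nat \<Rightarrow> seq)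
   \<Rightarrow> (nat \<Rightarrow> nat \<Rightarrow> bool) \<Rightarrow> nat \<Rightarrow> nat \<Rightarrow> nat \<Rightarrow> seq" where
  "cp pr c0 c1 E m n = (if E m n then c0 (pr m n + 1) else c1 (pr m n + 1))"

fun fG :: "(nat \<Rightarrow> nat set) \<Rightarrow> (nat \<Rightarrow> nat) \<Rightarrow> (nat \<Rightarrow> nat \<Rightarrow> nat)
   \<Rightarrow> (nat \<Rightarrow> nat \<Rightarrow> seq) \<Rightarrow> (nat \<Rightarrow> nat \<Rightarrow> seq) \<Rightarrow> (nat \<Rightarrow> nat \<Rightarrow> bool) \<Rightarrow> struc" where
  "fG A a pr c0 c1 E WRel xs =
     (\<exists>x. xs = [x] \<and> x \<in> A 0)"
| "fG A a pr c0 c1 E (RRel \<nu>) xs =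
     (\<exists>x m n. xs = [x] \<and> x \<in> A (pr m n + 1) \<and> Rrel \<nu> (cp pr c0 c1 E m n x))"
| "fG A a pr c0 c1 E (GRel \<nu>) xs =
     (\<exists>x y m n. xs = [x, y] \<and> x \<in> A (pr m n + 1) \<and> y \<in> A (pr m n + 1)
        \<and> Ffun \<nu> (cp pr c0 c1 E m n x) = cp pr c0 c1 E m n y)"
| "fG A a pr c0 c1 E NRel xs =
     (\<exists>i j y. xs = [a i, y] \<and> y \<in> A (pr i j + 1))"
| "fG A a pr c0 c1 E ORel xs =
     (\<exists>m n z. xs = [a m, a n, z] \<and> z \<in> A (pr m n + 1))"

end

theory Submission
  imports Defs "HOL-Library.Infinite_Set"
begin


fun rl :: "rsym \<Rightarrow> nat" where
  "rl (RRel \<nu>) = length \<nu>" | "rl WRel = 0" | "rl (GRel _) = 0" | "rl NRel = 0" | "rl ORel = 0"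

fun ml :: "fm \<Rightarrow> nat" where
  "ml (Atom r xs) = rl r" | "ml (Eq i j) = 0" | "ml (Neg \<phi>) = ml \<phi>"
| "ml (Conj \<phi> \<psi>) = max (ml \<phi>) (ml \<psi>)" | "ml (Ex i \<phi>) = ml \<phi>"

fun vs :: "fm \<Rightarrow> nat set" where
  "vs (Atom r xs) = set xs" | "vs (Eq i j) = {i, j}" | "vs (Neg \<phi>) = vs \<phi>"
| "vs (Conj \<phi> \<psi>) = vs \<phi> \<union> vs \<psi>" | "vs (Ex i \<phi>) = insert i (vs \<phi>)"

lemma finite_vs: "finite (vs \<phi>)" by (induction \<phi>) auto

lemma sat_coinc: "(\<forall>i\<in>vs \<phi>. e i = e' i) \<Longrightarrow> sat M e \<phi> = sat M e' \<phi>"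
proof (induction \<phi> arbitrary: e e')
  case (Atom r xs)
  then show ?case by (simp cong: map_cong)
next
  case (Ex i \<phi>)
  have "\<And>x. sat M (e(i:=x)) \<phi> = sat M (e'(i:=x)) \<phi>" using Ex by (intro Ex.IH) auto
  then show ?case by simp
next
  case (Neg \<phi>) then show ?case by simp
next
  case (Conj \<phi> \<psi>)
  have "sat M e \<phi> = sat M e' \<phi>" using Conj.IH(1) Conj.prems by auto
  moreover have "sat M e \<psi> = sat M e' \<psi>" using Conj.IH(2) Conj.prems by auto
  ultimately show ?case by simp
qed auto

lemma sat_iso:
  assumes "bij \<Phi>" "\<And>r xs. rl r \<le> L \<Longrightarrow> M r xs = N r (map \<Phi> xs)" "ml \<phi> \<le> L"
  shows "sat M e \<phi> = sat N (\<Phi> \<circ> e) \<phi>"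
  using assms(3)
proof (induction \<phi> arbitrary: e)
  case (Atom r xs)
  then show ?case using assms(2)[of r "map e xs"] by (simp add: o_def)
next
  case (Eq i j)
  then show ?case using bij_is_inj[OF assms(1)] by (simp add: inj_eq)
next
  case (Ex i \<phi>)
  have eq: "\<And>x. (\<Phi> \<circ> e)(i := \<Phi> x) = \<Phi> \<circ> (e(i:=x))" by auto
  have mlp: "ml \<phi> \<le> L" using Ex.prems by simp
  have "\<And>x. sat M (e(i:=x)) \<phi> = sat N (\<Phi> \<circ> (e(i:=x))) \<phi>" using Ex.IH[OF mlp] by blast
  then have "sat M e (Ex i \<phi>) = (\<exists>x. sat N (\<Phi> \<circ> (e(i:=x))) \<phi>)" by (simp only: sat.simps)
  also have "\<dots> = (\<exists>y. sat N ((\<Phi> \<circ> e)(i:=y)) \<phi>)"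
  proof
    assume "\<exists>x. sat N (\<Phi> \<circ> (e(i:=x))) \<phi>"
    then show "\<exists>y. sat N ((\<Phi> \<circ> e)(i:=y)) \<phi>" using eq by metis
  next
    assume "\<exists>y. sat N ((\<Phi> \<circ> e)(i:=y)) \<phi>"
    then obtain y where y: "sat N ((\<Phi> \<circ> e)(i:=y)) \<phi>" by blast
    obtain x where "y = \<Phi> x" using bij_is_surj[OF assms(1)] by (metis surj_def)
    then show "\<exists>x. sat N (\<Phi> \<circ> (e(i:=x))) \<phi>" using y eq by metis
  qed
  finally show ?case by (simp only: sat.simps)
qed auto

lemma emb_atom: "elem_emb M N h \<Longrightarrow> M r ys = N r (map h ys)"
proof -
  assume H: "elem_emb M N h"
  have "sat M (nth ys) (Atom r [0..<length ys]) = sat N (h \<circ> nth ys) (Atom r [0..<length ys])"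
    using H unfolding elem_emb_def by blast
  moreover have "map (h \<circ> nth ys) [0..<length ys] = map h ys"
    by (metis map_map map_nth)
  ultimately show ?thesis by (simp add: map_nth)
qed

lemma emb_inj: "elem_emb M N h \<Longrightarrow> inj h"
proof (rule injI)
  fix x y assume H: "elem_emb M N h" and "h x = h y"
  let ?e = "\<lambda>i::nat. if i = 0 then x else y"
  have "sat M ?e (Eq 0 1) = sat N (h \<circ> ?e) (Eq 0 1)" using H unfolding elem_emb_def by blast
  then show "x = y" using \<open>h x = h y\<close> by simp
qed

lemma gen_fin: "\<sigma> \<in> gen c \<Longrightarrow> finite {i. \<sigma> i \<noteq> c i}"
proof (induction rule: gen.induct)
  case base show ?case by simp
next
  case (step \<sigma> \<nu>)
  have "{i. Ffun \<nu> \<sigma> i \<noteq> c i} \<subseteq> {i. \<sigma> i \<noteq> c i} \<union> {..<length \<nu>}"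
    by (auto simp: Ffun_def nuval_def)
  then show ?case using step finite_subset by blast
qed

lemma fin_gen: assumes "finite {i. \<sigma> i \<noteq> c i}" shows "\<sigma> \<in> gen c"
proof -
  obtain N where N: "\<forall>i\<in>{i. \<sigma> i \<noteq> c i}. i < N" using assms finite_nat_set_iff_bounded by blast
  let ?\<nu> = "map (\<lambda>i. \<sigma> i \<noteq> c i) [0..<N]"
  have "Ffun ?\<nu> c = \<sigma>"
    unfolding Ffun_def nuval_def fun_eq_iff using N by auto
  then show ?thesis by (metis gen.base gen.step)
qed

lemma gen_iff: "\<sigma> \<in> gen c \<longleftrightarrow> finite {i. \<sigma> i \<noteq> c i}"
  using gen_fin fin_gen by blast

definition dl :: "nat \<Rightarrow> seq" where "dl L = (\<lambda>i. L \<le> i)"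

definition cs :: "bool \<Rightarrow> seq" where "cs b = (if b then zero_seq else one_seq)"

lemma xor_gen:
  assumes "\<sigma> \<in> gen (cs b)"
  shows "(\<lambda>i. \<sigma> i \<noteq> (if b = b' then zero_seq else dl L) i) \<in> gen (cs b')"
proof -
  have "{i. (\<sigma> i \<noteq> (if b = b' then zero_seq else dl L) i) \<noteq> cs b' i} \<subseteq> {i. \<sigma> i \<noteq> cs b i} \<union> {..<L}"
    by (auto simp: cs_def zero_seq_def one_seq_def dl_def)
  then show ?thesis using assms unfolding gen_iff using finite_subset by blast
qed

lemma cs_gen: "cs b \<in> gen (cs b)" by (rule gen.base)

lemma cs_not_gen: "b \<noteq> b' \<Longrightarrow> cs b \<notin> gen (cs b')"
  unfolding gen_iff by (auto simp: cs_def zero_seq_def one_seq_def)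

lemma extend_bij:
  fixes g :: "nat \<Rightarrow> nat"
  assumes "finite S" "inj g"
  shows "\<exists>\<pi>. bij \<pi> \<and> (\<forall>i\<in>S. \<pi> i = g i)"
proof -
  let ?T = "g ` S"
  have i1: "infinite (- S)" using assms(1) by (simp add: Compl_eq_Diff_UNIV infinite_UNIV_nat Diff_infinite_finite)
  have i2: "infinite (- ?T)" using assms(1) by (simp add: Compl_eq_Diff_UNIV infinite_UNIV_nat Diff_infinite_finite)
  have b1: "bij_betw (enumerate (- S)) UNIV (- S)" by (rule bij_enumerate[OF i1])
  have b2: "bij_betw (enumerate (- ?T)) UNIV (- ?T)" by (rule bij_enumerate[OF i2])
  define \<psi> where "\<psi> = enumerate (- ?T) \<circ> inv_into UNIV (enumerate (- S))"
  have bpsi: "bij_betw \<psi> (- S) (- ?T)" unfolding \<psi>_def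
    using bij_betw_trans[OF bij_betw_inv_into[OF b1] b2] .
  have bg: "bij_betw g S ?T" using inj_on_subset[OF assms(2) subset_UNIV] by (simp add: bij_betw_def)
  define \<pi> where "\<pi> = (\<lambda>i. if i \<in> S then g i else \<psi> i)"
  have "bij_betw \<pi> S ?T" using bg by (rule bij_betw_cong[THEN iffD1, rotated]) (simp add: \<pi>_def)
  moreover have "bij_betw \<pi> (- S) (- ?T)" using bpsi by (rule bij_betw_cong[THEN iffD1, rotated]) (simp add: \<pi>_def)
  ultimately have "bij_betw \<pi> (S \<union> - S) (?T \<union> - ?T)" by (rule bij_betw_combine) auto
  then have "bij \<pi>" by simp
  then show ?thesis by (auto simp: \<pi>_def)
qed



locale gp = fixes A a pr c0 c1 assumes gp: "good_params A a pr c0 c1"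
begin

lemma gp_disj: "\<forall>i j. i \<noteq> j \<longrightarrow> A i \<inter> A j = {}"
  using gp unfolding good_params_def by (elim conjE) assumption
lemma gp_cover: "(\<Union>i. A i) = UNIV"
  using gp unfolding good_params_def by (elim conjE) assumption
lemma a_bij: "bij_betw a UNIV (A 0)"
  using gp unfolding good_params_def by (elim conjE) assumption
lemma pr_bij: "bij (\<lambda>(m, n). pr m n)"
  using gp unfolding good_params_def by (elim conjE) assumption
lemma c0_bij: "bij_betw (c0 k) (A k) (gen zero_seq)"
  using gp unfolding good_params_def by (elim conjE) blast
lemma c1_bij: "bij_betw (c1 k) (A k) (gen one_seq)"
  using gp unfolding good_params_def by (elim conjE) blast

lemma disj: "x \<in> A i \<Longrightarrow> x \<in> A j \<Longrightarrow> i = j"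
  using gp_disj by blast

lemma cover: "\<exists>i. x \<in> A i"
  using gp_cover by blast

lemma a_in: "a i \<in> A 0"
  using a_bij by (rule bij_betw_apply) simp

lemma inj_a: "inj a"
  using a_bij unfolding bij_betw_def by (elim conjE)

lemma a_inj: "a i = a j \<longleftrightarrow> i = j"
  using inj_a by (simp add: inj_eq)

definition vtx :: "nat \<Rightarrow> nat" where "vtx x = inv a x"

lemma vtx_a[simp]: "vtx (a i) = i"
  unfolding vtx_def using inj_a by (rule inv_f_f)

lemma a_vtx: "x \<in> A 0 \<Longrightarrow> a (vtx x) = x"
proof -
  assume "x \<in> A 0"
  then have "x \<in> range a" using a_bij unfolding bij_betw_def by simp
  then show ?thesis unfolding vtx_def by (rule f_inv_into_f)
qed


lemma pr_inj: "pr m n = pr m' n' \<longleftrightarrow> m = m' \<and> n = n'"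
proof
  assume "pr m n = pr m' n'"
  then have "(\<lambda>(m, n). pr m n) (m, n) = (\<lambda>(m, n). pr m n) (m', n')" by simp
  from injD[OF bij_is_inj[OF pr_bij] this] show "m = m' \<and> n = n'" by simp
qed simp

lemma pr_surj: "\<exists>m n. pr m n = k"
proof -
  have "k \<in> range (\<lambda>(m, n). pr m n)" using bij_is_surj[OF pr_bij] by simp
  then obtain p where "k = (\<lambda>(m, n). pr m n) p" by blast
  then show ?thesis by (cases p) auto
qed

lemma notA0: "x \<notin> A 0 \<Longrightarrow> \<exists>m n. x \<in> A (pr m n + 1)"
proof -
  assume "x \<notin> A 0"
  obtain i where i: "x \<in> A i" using cover by blast
  have "i \<noteq> 0"
  proof
    assume "i = 0" then show False using i \<open>x \<notin> A 0\<close> by simp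
  qed
  obtain m n where "pr m n = i - 1" using pr_surj by blast
  then have "pr m n + 1 = i" using \<open>i \<noteq> 0\<close> by simp
  then show ?thesis using i by blast
qed

definition pmn :: "nat \<Rightarrow> nat \<times> nat" where
  "pmn x = (SOME p. x \<in> A (pr (fst p) (snd p) + 1))"

lemma pmn: "x \<notin> A 0 \<Longrightarrow> x \<in> A (pr (fst (pmn x)) (snd (pmn x)) + 1)"
proof -
  assume "x \<notin> A 0"
  then obtain m n where "x \<in> A (pr m n + 1)" using notA0 by blast
  then have "x \<in> A (pr (fst (m,n)) (snd (m,n)) + 1)" by simp
  then show ?thesis unfolding pmn_def by (rule someI[where P="\<lambda>p. x \<in> A (pr (fst p) (snd p) + 1)"])
qed

lemma piece_notA0: "x \<in> A (pr m n + 1) \<Longrightarrow> x \<notin> A 0"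
proof
  assume "x \<in> A (pr m n + 1)" "x \<in> A 0"
  from disj[OF this] show False by simp
qed

lemma pmn_eq: "x \<in> A (pr m n + 1) \<Longrightarrow> pmn x = (m, n)"
proof -
  assume x: "x \<in> A (pr m n + 1)"
  then have "x \<in> A (pr (fst (pmn x)) (snd (pmn x)) + 1)" using pmn piece_notA0 by blast
  from disj[OF this x] have "pr (fst (pmn x)) (snd (pmn x)) = pr m n" by simp
  then have "fst (pmn x) = m \<and> snd (pmn x) = n" by (simp only: pr_inj)
  then show ?thesis by (simp add: prod_eq_iff)
qed

lemma cp_bij: "bij_betw (cp pr c0 c1 E m n) (A (pr m n + 1)) (gen (cs (E m n)))"
  using c0_bij c1_bij unfolding cp_def cs_def by (cases "E m n") auto

lemma cp_in: "x \<in> A (pr m n + 1) \<Longrightarrow> cp pr c0 c1 E m n x \<in> gen (cs (E m n))"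
  using cp_bij by (rule bij_betw_apply)

lemma cp_inj: "x \<in> A (pr m n + 1) \<Longrightarrow> y \<in> A (pr m n + 1) \<Longrightarrow> cp pr c0 c1 E m n x = cp pr c0 c1 E m n y \<Longrightarrow> x = y"
  using cp_bij[of E m n] unfolding bij_betw_def by (elim conjE) (rule inj_onD)

lemma cp_inv: "\<sigma> \<in> gen (cs (E m n)) \<Longrightarrow> inv_into (A (pr m n + 1)) (cp pr c0 c1 E m n) \<sigma> \<in> A (pr m n + 1)
   \<and> cp pr c0 c1 E m n (inv_into (A (pr m n + 1)) (cp pr c0 c1 E m n) \<sigma>) = \<sigma>"
proof -
  assume s: "\<sigma> \<in> gen (cs (E m n))"
  then have "\<sigma> \<in> cp pr c0 c1 E m n ` A (pr m n + 1)" using cp_bij[of E m n] unfolding bij_betw_def by simp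
  then show ?thesis by (simp add: inv_into_into f_inv_into_f)
qed

abbreviation cpp where "cpp E x \<equiv> cp pr c0 c1 E (fst (pmn x)) (snd (pmn x)) x"

lemma fG_len: "length xs \<noteq> arity r \<Longrightarrow> \<not> fG A a pr c0 c1 E r xs"
  by (cases r; cases xs) auto

lemma fG_W: "fG A a pr c0 c1 E WRel [x] = (x \<in> A 0)" by simp

lemma fG_R: "fG A a pr c0 c1 E (RRel \<nu>) [x] = (x \<notin> A 0 \<and> Rrel \<nu> (cpp E x))"
proof
  assume "fG A a pr c0 c1 E (RRel \<nu>) [x]"
  then obtain m n where "x \<in> A (pr m n + 1)" "Rrel \<nu> (cp pr c0 c1 E m n x)" by auto
  then show "x \<notin> A 0 \<and> Rrel \<nu> (cpp E x)" using pmn_eq piece_notA0 by simp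
next
  assume H: "x \<notin> A 0 \<and> Rrel \<nu> (cpp E x)"
  then have "x \<in> A (pr (fst (pmn x)) (snd (pmn x)) + 1)" using pmn by blast
  then show "fG A a pr c0 c1 E (RRel \<nu>) [x]" using H by auto
qed

lemma fG_G: "fG A a pr c0 c1 E (GRel \<nu>) [x, y] = (x \<notin> A 0 \<and> y \<notin> A 0 \<and> pmn x = pmn y
    \<and> Ffun \<nu> (cpp E x) = cp pr c0 c1 E (fst (pmn x)) (snd (pmn x)) y)"
proof
  assume "fG A a pr c0 c1 E (GRel \<nu>) [x, y]"
  then obtain m n where "x \<in> A (pr m n + 1)" "y \<in> A (pr m n + 1)"
     "Ffun \<nu> (cp pr c0 c1 E m n x) = cp pr c0 c1 E m n y" by auto
  then show "x \<notin> A 0 \<and> y \<notin> A 0 \<and> pmn x = pmn y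
    \<and> Ffun \<nu> (cpp E x) = cp pr c0 c1 E (fst (pmn x)) (snd (pmn x)) y" using pmn_eq piece_notA0 by simp
next
  assume H: "x \<notin> A 0 \<and> y \<notin> A 0 \<and> pmn x = pmn y
    \<and> Ffun \<nu> (cpp E x) = cp pr c0 c1 E (fst (pmn x)) (snd (pmn x)) y"
  have hx: "x \<in> A (pr (fst (pmn x)) (snd (pmn x)) + 1)" using pmn H by blast
  have "y \<in> A (pr (fst (pmn y)) (snd (pmn y)) + 1)" using pmn H by blast
  then have hy: "y \<in> A (pr (fst (pmn x)) (snd (pmn x)) + 1)" using H by simp
  show "fG A a pr c0 c1 E (GRel \<nu>) [x, y]" unfolding fG.simps
    apply (rule exI[of _ x], rule exI[of _ y], rule exI[of _ "fst (pmn x)"], rule exI[of _ "snd (pmn x)"])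
    using hx hy H by blast
qed

lemma fG_N: "fG A a pr c0 c1 E NRel [x, y] = (x \<in> A 0 \<and> y \<notin> A 0 \<and> fst (pmn y) = vtx x)"
proof
  assume "fG A a pr c0 c1 E NRel [x, y]"
  then obtain i j where "x = a i" "y \<in> A (pr i j + 1)" by auto
  then show "x \<in> A 0 \<and> y \<notin> A 0 \<and> fst (pmn y) = vtx x" using pmn_eq piece_notA0 a_in by simp
next
  assume H: "x \<in> A 0 \<and> y \<notin> A 0 \<and> fst (pmn y) = vtx x"
  then have "y \<in> A (pr (vtx x) (snd (pmn y)) + 1)" using pmn by metis
  moreover have "x = a (vtx x)" using H a_vtx by simp
  ultimately show "fG A a pr c0 c1 E NRel [x, y]" by auto
qed

lemma fG_O: "fG A a pr c0 c1 E ORel [x, y, z] = (x \<in> A 0 \<and> y \<in> A 0 \<and> z \<notin> A 0 \<and> pmn z = (vtx x, vtx y))"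
proof
  assume "fG A a pr c0 c1 E ORel [x, y, z]"
  then obtain m n where "x = a m" "y = a n" "z \<in> A (pr m n + 1)" by auto
  then show "x \<in> A 0 \<and> y \<in> A 0 \<and> z \<notin> A 0 \<and> pmn z = (vtx x, vtx y)" using pmn_eq piece_notA0 a_in by simp
next
  assume H: "x \<in> A 0 \<and> y \<in> A 0 \<and> z \<notin> A 0 \<and> pmn z = (vtx x, vtx y)"
  then have "z \<in> A (pr (vtx x) (vtx y) + 1)" using pmn by (metis fst_conv snd_conv)
  moreover have "x = a (vtx x)" "y = a (vtx y)" using H a_vtx by simp_all
  ultimately show "fG A a pr c0 c1 E ORel [x, y, z]" by auto
qed

end


lemma Rrel_xor: "length \<nu> \<le> L \<Longrightarrow> \<forall>i<L. \<not> d i \<Longrightarrow> Rrel \<nu> (\<lambda>i. \<sigma> i \<noteq> d i) = Rrel \<nu> \<sigma>"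
  unfolding Rrel_def by auto

lemma Ffun_xor: "Ffun \<nu> (\<lambda>i. \<sigma> i \<noteq> d i) = (\<lambda>i. \<tau> i \<noteq> d i) \<longleftrightarrow> Ffun \<nu> \<sigma> = \<tau>"
  unfolding Ffun_def fun_eq_iff by auto

lemma xor_cancel: "(\<lambda>i. (\<sigma>::seq) i \<noteq> (d::seq) i) = (\<lambda>i. \<tau> i \<noteq> d i) \<longleftrightarrow> \<sigma> = \<tau>"
proof
  assume h: "(\<lambda>i. \<sigma> i \<noteq> d i) = (\<lambda>i. \<tau> i \<noteq> d i)"
  show "\<sigma> = \<tau>"
  proof
    fix i from fun_cong[OF h, of i] show "\<sigma> i = \<tau> i" by auto
  qed
qed simp

context gp
begin

definition dd :: "(nat\<Rightarrow>nat\<Rightarrow>bool) \<Rightarrow> (nat\<Rightarrow>nat\<Rightarrow>bool) \<Rightarrow> (nat\<Rightarrow>nat) \<Rightarrow> nat \<Rightarrow> nat \<Rightarrow> nat \<Rightarrow> seq" where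
  "dd E E' \<pi> L m n = (if E m n = E' (\<pi> m) (\<pi> n) then zero_seq else dl L)"

lemma dd_low: "i < L \<Longrightarrow> \<not> dd E E' \<pi> L m n i"
  by (simp add: dd_def zero_seq_def dl_def)

definition Phi :: "(nat\<Rightarrow>nat\<Rightarrow>bool) \<Rightarrow> (nat\<Rightarrow>nat\<Rightarrow>bool) \<Rightarrow> (nat\<Rightarrow>nat) \<Rightarrow> nat \<Rightarrow> nat \<Rightarrow> nat" where
 "Phi E E' \<pi> L x = (if x \<in> A 0 then a (\<pi> (vtx x)) else
    inv_into (A (pr (\<pi> (fst (pmn x))) (\<pi> (snd (pmn x))) + 1)) (cp pr c0 c1 E' (\<pi> (fst (pmn x))) (\<pi> (snd (pmn x))))
      (\<lambda>i. cpp E x i \<noteq> dd E E' \<pi> L (fst (pmn x)) (snd (pmn x)) i))"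

lemma Phi_A0: "x \<in> A 0 \<Longrightarrow> Phi E E' \<pi> L x = a (\<pi> (vtx x))"
  by (simp add: Phi_def)

lemma Phi_piece:
  assumes "x \<in> A (pr m n + 1)"
  shows "Phi E E' \<pi> L x \<in> A (pr (\<pi> m) (\<pi> n) + 1) \<and>
     cp pr c0 c1 E' (\<pi> m) (\<pi> n) (Phi E E' \<pi> L x) = (\<lambda>i. cp pr c0 c1 E m n x i \<noteq> dd E E' \<pi> L m n i)"
proof -
  have p: "pmn x = (m,n)" using pmn_eq assms .
  have nx: "x \<notin> A 0" using piece_notA0 assms .
  have "cp pr c0 c1 E m n x \<in> gen (cs (E m n))" using cp_in assms .
  then have "(\<lambda>i. cp pr c0 c1 E m n x i \<noteq> dd E E' \<pi> L m n i) \<in> gen (cs (E' (\<pi> m) (\<pi> n)))"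
    unfolding dd_def by (rule xor_gen)
  from cp_inv[where E=E' and m="\<pi> m" and n="\<pi> n", OF this] show ?thesis by (simp add: Phi_def p nx)
qed

lemma Phi_A0_iff: "Phi E E' \<pi> L x \<in> A 0 \<longleftrightarrow> x \<in> A 0"
proof
  assume h: "Phi E E' \<pi> L x \<in> A 0"
  show "x \<in> A 0"
  proof (rule ccontr)
    assume "x \<notin> A 0"
    then obtain m n where "x \<in> A (pr m n + 1)" using notA0 by blast
    then have "Phi E E' \<pi> L x \<in> A (pr (\<pi> m) (\<pi> n) + 1)" using Phi_piece by blast
    then show False using h piece_notA0 by blast
  qed
qed (simp add: Phi_A0 a_in)

lemma Phi_pmn: "x \<notin> A 0 \<Longrightarrow> pmn (Phi E E' \<pi> L x) = (\<pi> (fst (pmn x)), \<pi> (snd (pmn x)))"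
  using Phi_piece[OF pmn] pmn_eq by blast

lemma Phi_cpp: "x \<notin> A 0 \<Longrightarrow> cpp E' (Phi E E' \<pi> L x) = (\<lambda>i. cpp E x i \<noteq> dd E E' \<pi> L (fst (pmn x)) (snd (pmn x)) i)"
  using Phi_piece[OF pmn, where x=x and E=E and E'=E' and \<pi>=\<pi> and L=L] Phi_pmn[where x=x and E=E and E'=E' and \<pi>=\<pi> and L=L] by simp

lemma Phi_cp2: "x \<notin> A 0 \<Longrightarrow> pmn y = pmn x \<Longrightarrow> y \<notin> A 0 \<Longrightarrow>
   cp pr c0 c1 E' (\<pi> (fst (pmn x))) (\<pi> (snd (pmn x))) (Phi E E' \<pi> L y) = (\<lambda>i. cpp E y i \<noteq> dd E E' \<pi> L (fst (pmn x)) (snd (pmn x)) i)"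
  using Phi_cpp[where x=y and E=E and E'=E' and \<pi>=\<pi> and L=L] Phi_pmn[where x=y and E=E and E'=E' and \<pi>=\<pi> and L=L] by simp

lemma Phi_inj:
  assumes "inj \<pi>"
  shows "inj (Phi E E' \<pi> L)"
proof (rule injI)
  fix x y assume eq: "Phi E E' \<pi> L x = Phi E E' \<pi> L y"
  show "x = y"
  proof (cases "x \<in> A 0")
    case True
    then have "y \<in> A 0" using eq Phi_A0_iff by metis
    then have "a (\<pi> (vtx x)) = a (\<pi> (vtx y))" using eq Phi_A0 True by simp
    then have "vtx x = vtx y" using a_inj inj_eq[OF assms] by simp
    then show ?thesis using a_vtx True \<open>y \<in> A 0\<close> by metis
  next
    case False
    then have ny: "y \<notin> A 0" using eq Phi_A0_iff by metis
    obtain m n where x: "x \<in> A (pr m n + 1)" using notA0 False by blast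
    obtain m' n' where y: "y \<in> A (pr m' n' + 1)" using notA0 ny by blast
    have px: "Phi E E' \<pi> L x \<in> A (pr (\<pi> m) (\<pi> n) + 1)" using Phi_piece[OF x] by blast
    have py: "Phi E E' \<pi> L x \<in> A (pr (\<pi> m') (\<pi> n') + 1)" using Phi_piece[OF y] eq by simp
    from disj[OF px py] have "pr (\<pi> m) (\<pi> n) = pr (\<pi> m') (\<pi> n')" by simp
    then have "\<pi> m = \<pi> m' \<and> \<pi> n = \<pi> n'" by (simp only: pr_inj)
    then have mm: "m = m'" "n = n'" using inj_eq[OF assms] by auto
    have "(\<lambda>i. cp pr c0 c1 E m n x i \<noteq> dd E E' \<pi> L m n i) = (\<lambda>i. cp pr c0 c1 E m n y i \<noteq> dd E E' \<pi> L m n i)"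
      using Phi_piece[OF x, where E=E and E'=E' and \<pi>=\<pi> and L=L] Phi_piece[OF y, where E=E and E'=E' and \<pi>=\<pi> and L=L] eq mm by simp
    then have "cp pr c0 c1 E m n x = cp pr c0 c1 E m n y" by (simp only: xor_cancel)
    then show ?thesis using cp_inj x y mm by blast
  qed
qed

lemma Phi_surj:
  assumes "surj \<pi>"
  shows "surj (Phi E E' \<pi> L)"
proof -
  have "y \<in> range (Phi E E' \<pi> L)" for y
  proof (cases "y \<in> A 0")
    case True
    obtain i where i: "vtx y = \<pi> i" using assms by (metis surj_def)
    have "Phi E E' \<pi> L (a i) = y" using Phi_A0[OF a_in] i a_vtx[OF True] by simp
    then show ?thesis by (metis rangeI)
  next
    case False
    obtain m' n' where y: "y \<in> A (pr m' n' + 1)" using notA0 False by blast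
    obtain m where m: "\<pi> m = m'" using assms by (metis surj_def)
    obtain n where n: "\<pi> n = n'" using assms by (metis surj_def)
    define \<tau> where "\<tau> = cp pr c0 c1 E' m' n' y"
    have t: "\<tau> \<in> gen (cs (E' m' n'))" unfolding \<tau>_def using cp_in y .
    have dd': "dd E E' \<pi> L m n = (if E' m' n' = E m n then zero_seq else dl L)"
      using m n by (auto simp: dd_def)
    define \<sigma> where "\<sigma> = (\<lambda>i. \<tau> i \<noteq> dd E E' \<pi> L m n i)"
    have s: "\<sigma> \<in> gen (cs (E m n))" unfolding \<sigma>_def dd' using t by (rule xor_gen)
    define x where "x = inv_into (A (pr m n + 1)) (cp pr c0 c1 E m n) \<sigma>"
    have x: "x \<in> A (pr m n + 1)" "cp pr c0 c1 E m n x = \<sigma>" using cp_inv[where E=E and m=m and n=n, OF s] unfolding x_def by auto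
    have "Phi E E' \<pi> L x \<in> A (pr m' n' + 1)"
      "cp pr c0 c1 E' m' n' (Phi E E' \<pi> L x) = (\<lambda>i. \<sigma> i \<noteq> dd E E' \<pi> L m n i)"
      using Phi_piece[OF x(1), where E=E and E'=E' and \<pi>=\<pi> and L=L] m n x(2) by auto
    moreover have "(\<lambda>i. \<sigma> i \<noteq> dd E E' \<pi> L m n i) = \<tau>" unfolding \<sigma>_def fun_eq_iff by auto
    ultimately have "Phi E E' \<pi> L x = y" using cp_inj y unfolding \<tau>_def by metis
    then show ?thesis by (metis rangeI)
  qed
  then show ?thesis by blast
qed

lemma Phi_bij: "bij \<pi> \<Longrightarrow> bij (Phi E E' \<pi> L)"
  using Phi_inj Phi_surj bij_def by metis

end


lemma Rrel_const: "(\<forall>j. c j = b) \<Longrightarrow> Rrel (replicate k b) c"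
  unfolding Rrel_def by simp

lemma Rrel_rep: "Rrel (replicate k b) \<tau> \<Longrightarrow> j < k \<Longrightarrow> \<tau> j = b"
  unfolding Rrel_def by simp

lemma cs_const: "\<forall>j. cs b j = cs b 0"
  by (simp add: cs_def zero_seq_def one_seq_def)

declare fG.simps[simp del]

context gp
begin

lemma Phi_vtx: "x \<in> A 0 \<Longrightarrow> vtx (Phi E E' \<pi> L x) = \<pi> (vtx x)"
  by (simp add: Phi_A0)

lemma Phi_atoms:
  assumes "inj \<pi>" "rl r \<le> L"
  shows "fG A a pr c0 c1 E r xs = fG A a pr c0 c1 E' r (map (Phi E E' \<pi> L) xs)"
proof (cases "length xs = arity r")
  case False
  then show ?thesis using fG_len by (metis length_map)
next
  case True
  let ?P = "Phi E E' \<pi> L"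
  show ?thesis
  proof (cases r)
    case WRel
    then obtain x where "xs = [x]" using True by (cases xs) auto
    then show ?thesis using WRel Phi_A0_iff by (simp add: fG_W)
  next
    case (RRel \<nu>)
    then obtain x where xs: "xs = [x]" using True by (cases xs) auto
    show ?thesis
    proof (cases "x \<in> A 0")
      case True then show ?thesis using RRel xs fG_R Phi_A0_iff by simp
    next
      case False
      have len: "length \<nu> \<le> L" using assms(2) RRel by simp
      have "Rrel \<nu> (cpp E' (?P x)) = Rrel \<nu> (cpp E x)"
      proof -
        have "\<forall>i<L. \<not> dd E E' \<pi> L (fst (pmn x)) (snd (pmn x)) i" using dd_low by simp
        from Rrel_xor[OF len this] show ?thesis unfolding Phi_cpp[OF False] .
      qed
      then show ?thesis using RRel xs fG_R Phi_A0_iff False by simp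
    qed
  next
    case (GRel \<nu>)
    then obtain x y where xs: "xs = [x, y]" using True
      by (cases xs; cases "tl xs") auto
    show ?thesis
    proof (cases "x \<notin> A 0 \<and> y \<notin> A 0")
      case False then show ?thesis by (auto simp add: GRel xs fG_G Phi_A0_iff)
    next
      case nn: True
      have pe: "pmn (?P x) = pmn (?P y) \<longleftrightarrow> pmn x = pmn y"
        using Phi_pmn[of x] Phi_pmn[of y] nn by (simp add: prod_eq_iff inj_eq[OF assms(1)])
      show ?thesis
      proof (cases "pmn x = pmn y")
        case False then show ?thesis using pe by (simp add: GRel xs fG_G)
      next
        case eq: True
        have "cp pr c0 c1 E' (fst (pmn (?P x))) (snd (pmn (?P x))) (?P y) = cpp E' (?P y)"
          using pe eq by simp
        also have "\<dots> = (\<lambda>i. cpp E y i \<noteq> dd E E' \<pi> L (fst (pmn x)) (snd (pmn x)) i)"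
          using Phi_cpp[of y] nn eq by simp
        finally have e1: "cp pr c0 c1 E' (fst (pmn (?P x))) (snd (pmn (?P x))) (?P y) = \<dots>" .
        have "Ffun \<nu> (cpp E' (?P x)) = cp pr c0 c1 E' (fst (pmn (?P x))) (snd (pmn (?P x))) (?P y)
           \<longleftrightarrow> Ffun \<nu> (cpp E x) = cp pr c0 c1 E (fst (pmn x)) (snd (pmn x)) y"
          unfolding e1 Phi_cpp[of x, OF conjunct1[OF nn]] using Ffun_xor eq by simp
        then show ?thesis using GRel xs fG_G pe eq nn Phi_A0_iff by simp
      qed
    qed
  next
    case NRel
    then obtain x y where xs: "xs = [x, y]" using True
      by (cases xs; cases "tl xs") auto
    show ?thesis
    proof (cases "x \<in> A 0 \<and> y \<notin> A 0")
      case False then show ?thesis by (auto simp add: NRel xs fG_N Phi_A0_iff)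
    next
      case True
      then show ?thesis using NRel xs fG_N Phi_A0_iff Phi_pmn Phi_vtx inj_eq[OF assms(1)] by simp
    qed
  next
    case ORel
    then obtain x y z where xs: "xs = [x, y, z]" using True
      by (cases xs; cases "tl xs"; cases "tl (tl xs)") auto
    show ?thesis
    proof (cases "x \<in> A 0 \<and> y \<in> A 0 \<and> z \<notin> A 0")
      case False then show ?thesis by (auto simp add: ORel xs fG_O Phi_A0_iff)
    next
      case True
      then show ?thesis using ORel xs fG_O Phi_A0_iff Phi_pmn Phi_vtx inj_eq[OF assms(1)]
        by (simp add: prod_eq_iff)
    qed
  qed
qed

definition vset :: "nat \<Rightarrow> nat set" where
  "vset x = (if x \<in> A 0 then {vtx x} else {fst (pmn x), snd (pmn x)})"

lemma fwd:
  assumes g: "inj g" and ge: "\<forall>m n. E m n = E' (g m) (g n)"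
  shows "elem_emb (fG A a pr c0 c1 E) (fG A a pr c0 c1 E') (Phi E E' g 0)"
  unfolding elem_emb_def
proof (intro allI)
  fix \<phi> e
  define S where "S = (\<Union>j\<in>vs \<phi>. vset (e j))"
  have "finite S" unfolding S_def vset_def using finite_vs by auto
  then obtain \<pi> where \<pi>: "bij \<pi>" "\<forall>i\<in>S. \<pi> i = g i" using extend_bij g by blast
  let ?L = "ml \<phi>"
  have "sat (fG A a pr c0 c1 E) e \<phi> = sat (fG A a pr c0 c1 E') (Phi E E' \<pi> ?L \<circ> e) \<phi>"
  proof (rule sat_iso[where L="ml \<phi>" and \<Phi>="Phi E E' \<pi> (ml \<phi>)"])
    show "bij (Phi E E' \<pi> (ml \<phi>))" using Phi_bij[OF \<pi>(1)] .
    show "fG A a pr c0 c1 E r xs = fG A a pr c0 c1 E' r (map (Phi E E' \<pi> (ml \<phi>)) xs)"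
      if "rl r \<le> ml \<phi>" for r xs using Phi_atoms[OF bij_is_inj[OF \<pi>(1)] that] .
  qed simp
  also have "\<dots> = sat (fG A a pr c0 c1 E') (Phi E E' g 0 \<circ> e) \<phi>"
  proof (rule sat_coinc, intro ballI)
    fix j assume j: "j \<in> vs \<phi>"
    show "(Phi E E' \<pi> ?L \<circ> e) j = (Phi E E' g 0 \<circ> e) j"
    proof (cases "e j \<in> A 0")
      case True
      then have "vtx (e j) \<in> S" using j unfolding S_def vset_def by auto
      then show ?thesis using True \<pi>(2) by (simp add: Phi_A0)
    next
      case False
      then have "fst (pmn (e j)) \<in> S" "snd (pmn (e j)) \<in> S" using j unfolding S_def vset_def by auto
      then have "\<pi> (fst (pmn (e j))) = g (fst (pmn (e j)))" "\<pi> (snd (pmn (e j))) = g (snd (pmn (e j)))"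
        using \<pi>(2) by auto
      then show ?thesis using False ge by (simp add: Phi_def dd_def)
    qed
  qed
  finally show "sat (fG A a pr c0 c1 E) e \<phi> = sat (fG A a pr c0 c1 E') (Phi E E' g 0 \<circ> e) \<phi>" .
qed

lemma bwd:
  assumes h: "elem_emb (fG A a pr c0 c1 E) (fG A a pr c0 c1 E') h"
  shows "graph_embeds E E'"
proof -
  let ?M = "fG A a pr c0 c1 E" and ?N = "fG A a pr c0 c1 E'"
  have at: "\<And>r ys. ?M r ys = ?N r (map h ys)" using emb_atom[OF h] .
  have ih: "inj h" using emb_inj[OF h] .
  define g where "g i = vtx (h (a i))" for i
  have hA: "h (a i) \<in> A 0" for i using at[of WRel "[a i]"] a_in by (simp add: fG_W)
  have hg: "h (a i) = a (g i)" for i unfolding g_def using a_vtx[OF hA] by simp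
  have "inj g"
  proof (rule injI)
    fix i j assume "g i = g j"
    then have "h (a i) = h (a j)" using hg by simp
    then show "i = j" using ih a_inj by (simp add: inj_eq)
  qed
  moreover have "E m n = E' (g m) (g n)" for m n
  proof (rule ccontr)
    assume ne: "E m n \<noteq> E' (g m) (g n)"
    obtain x where x: "x \<in> A (pr m n + 1)" "cp pr c0 c1 E m n x = cs (E m n)"
      using cp_inv[where E=E and m=m and n=n, OF cs_gen] by blast
    have "?M ORel [a m, a n, x]" using fG_O x pmn_eq piece_notA0 a_in by simp
    then have "?N ORel [a (g m), a (g n), h x]" using at[of ORel "[a m, a n, x]"] hg by simp
    then have hx: "h x \<notin> A 0" "pmn (h x) = (g m, g n)" using fG_O by simp_all
    then have hxp: "h x \<in> A (pr (g m) (g n) + 1)" using pmn by (metis fst_conv snd_conv)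
    define \<tau> where "\<tau> = cp pr c0 c1 E' (g m) (g n) (h x)"
    have tg: "\<tau> \<in> gen (cs (E' (g m) (g n)))" unfolding \<tau>_def using cp_in hxp .
    have "\<tau> = cs (E m n)"
    proof
      fix i
      let ?\<nu> = "replicate (Suc i) (cs (E m n) 0)"
      have "Rrel ?\<nu> (cs (E m n))" by (rule Rrel_const[OF cs_const])
      then have "?M (RRel ?\<nu>) [x]" using fG_R x pmn_eq piece_notA0 by simp
      then have "?N (RRel ?\<nu>) [h x]" using at[of "RRel ?\<nu>" "[x]"] by simp
      then have "Rrel ?\<nu> \<tau>" using fG_R hx unfolding \<tau>_def by simp
      then have "\<tau> i = cs (E m n) 0" by (rule Rrel_rep) simp
      then show "\<tau> i = cs (E m n) i" using cs_const by metis
    qed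
    then show False using tg cs_not_gen ne by metis
  qed
  ultimately show ?thesis unfolding graph_embeds_def by blast
qed

end

theorem lemma3p2:
  assumes "good_params A a pr c0 c1"
    and "is_graph E" and "is_graph E'"
  shows "graph_embeds E E' \<longleftrightarrow>
         elem_embeddable (fG A a pr c0 c1 E) (fG A a pr c0 c1 E')"
proof
  assume "graph_embeds E E'"
  then obtain g where "inj g" "\<forall>m n. E m n = E' (g m) (g n)" unfolding graph_embeds_def by blast
  then show "elem_embeddable (fG A a pr c0 c1 E) (fG A a pr c0 c1 E')"
    unfolding elem_embeddable_def using gp.fwd[OF gp.intro[OF assms(1)]] by blast
next
  assume "elem_embeddable (fG A a pr c0 c1 E) (fG A a pr c0 c1 E')"
  then show "graph_embeds E E'"
    unfolding elem_embeddable_def using gp.bwd[OF gp.intro[OF assms(1)]] by blast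
qed


end
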